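(* Let $\mathbf X=(X_1,\dots,X_k)$, $2\le k\le n$, be homogeneous coordinates of proper cycles and $S$ a vector with $(S\mid S)\le0$ such that $X_1,\dots,X_k,S$ are linearly independent and $\Delta(\mathbf X,S)<0$. (1) If $(S\mid S)<0$: every nonproper cycle $x\in\langle\mathbf x,s\rangle$ with $x\neq s$ has exactly two projections onto $\Omega$ along $s$; every cycle $x\in\langle\mathbf x,s\rangle\cap\langle s\rangle^\perp$ satisfies $(X\mid X)>0$ (in particular is nonproper); and $\langle\mathbf X,S\rangle=(\langle\mathbf X,S\rangle\cap\langle S\rangle^\perp)\oplus\langle S\rangle$. (2) If $(S\mid S)=0$: every cycle $x\in\langle\mathbf x,s\rangle\cap\langle s\rangle^\perp$ with $x\neq s$ satisfies $(X\mid X)>0$ and has no projection onto $\Omega$ along $s$ other than $s$; and for any proper cycle $y\in\langle\mathbf x,s\rangle$ with $y\notin\langle s\rangle^\perp$, $\langle\mathbf X,S\rangle=(\langle\mathbf X,S\rangle\cap\langle S\rangle^\perp)\oplus\langle Y\rangle$.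
   Context: Let $n\ge 2$. For $X=(\xi_0,\boldsymbol\xi_1,\xi_2,\xi_3)$ and $Y=(\eta_0,\boldsymbol\eta_1,\eta_2,\eta_3)$ in $\mathbb{R}^{n+3}=\mathbb{R}\times\mathbb{R}^n\times\mathbb{R}\times\mathbb{R}$, the Lie product is the nondegenerate symmetric bilinear form $(X\mid Y)=\xi_0\eta_2+\boldsymbol\xi_1\cdot\boldsymbol\eta_1+\xi_2\eta_0-\xi_3\eta_3$ (signature $(n+1,2)$). Points of $\mathbb{P}^{n+2}$ are called cycles; a lowercase letter denotes a cycle and the uppercase letter a homogeneous coordinate vector of it. The Lie quadric is $\Omega=\{x:(X\mid X)=0\}$; cycles in $\Omega$ are proper, the others nonproper. For a list $\mathbf X$, $\langle\mathbf X\rangle$ is its span, $\langle\mathbf X\rangle^\perp=\{Y:(X_i\mid Y)=0\ \forall i\}$, $\langle\mathbf x\rangle,\langle\mathbf x\rangle^\perp$ the corresponding projective subspaces, and $\Delta(\mathbf X)=\det[(X_i\mid X_j)]$ the Gram determinant. The set $\langle\mathbf x,s\rangle\cap\Omega$ is an $s$-family, called hyperbolic when $\Delta(\mathbf X,S)<0$. A projection of $x$ onto $\Omega$ along $s$ is a point of $\langle x,s\rangle\cap\Omega$. *)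

theory Defs
  imports "HOL-Analysis.Analysis"
begin

text \<open>Vectors of R^(n+3) = R x R^n x R x R; the index type 'n has CARD('n) = n.\<close>
type_synonym 'n lievec = "real \<times> (real^'n) \<times> real \<times> real"

definition lie_prod :: "'n::finite lievec \<Rightarrow> 'n lievec \<Rightarrow> real" where
  "lie_prod X Y = (case X of (x0, x1, x2, x3) \<Rightarrow> case Y of (y0, y1, y2, y3) \<Rightarrow>
      x0 * y2 + x1 \<bullet> y1 + x2 * y0 - x3 * y3)"

definition gram_det :: "'n::finite lievec list \<Rightarrow> real" where
  "gram_det Xs = (\<Sum>p\<in>{p. p permutes {..<length Xs}}.
       of_int (sign p) * (\<Prod>i<length Xs. lie_prod (Xs ! i) (Xs ! (p i))))"

text \<open>The cycle (projective point) with homogeneous coordinate vector X \<noteq> 0 is the line span {X}.\<close>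
definition cycle :: "'n::finite lievec \<Rightarrow> 'n lievec set" where
  "cycle X = span {X}"

definition lie_perp :: "'n::finite lievec set \<Rightarrow> 'n lievec set" where
  "lie_perp A = {Y. \<forall>X\<in>A. lie_prod X Y = 0}"

text \<open>The set of projections of the cycle x onto the Lie quadric along s:
  the points of <x,s> \<inter> Omega.\<close>
definition projections :: "'n::finite lievec \<Rightarrow> 'n lievec \<Rightarrow> 'n lievec set set" where
  "projections X S = {cycle P | P. P \<noteq> 0 \<and> P \<in> span {X, S} \<and> lie_prod P P = 0}"

definition direct_sum_eq :: "'n::finite lievec set \<Rightarrow> 'n lievec set \<Rightarrow> 'n lievec set \<Rightarrow> bool" where
  "direct_sum_eq V U W \<longleftrightarrow> V = {u + w | u w. u \<in> U \<and> w \<in> W} \<and> U \<inter> W = {0}"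

end

theory Submission
  imports Defs "Jordan_Normal_Form.Determinant"
begin

lemma lie_prod_alt: "lie_prod X Y = fst X * fst (snd (snd Y)) + fst (snd X) \<bullet> fst (snd Y)
   + fst (snd (snd X)) * fst Y - snd (snd (snd X)) * snd (snd (snd Y))"
  by (cases X; cases Y) (auto simp: lie_prod_def)

lemma lie_sym: "lie_prod X Y = lie_prod Y X"
  by (simp add: lie_prod_alt inner_commute algebra_simps)

lemma linear_lie_left: "linear (\<lambda>X. lie_prod X Y)"
  by (rule linearI) (simp_all add: lie_prod_alt inner_add_left algebra_simps)

lemma linear_lie_right: "linear (\<lambda>Y. lie_prod X Y)"
  using linear_lie_left[of X] by (simp add: lie_sym)

lemma lie_add_left: "lie_prod (X + Z) Y = lie_prod X Y + lie_prod Z Y"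
  using linear_add[OF linear_lie_left] by blast
lemma lie_add_right: "lie_prod Y (X + Z) = lie_prod Y X + lie_prod Y Z"
  using linear_add[OF linear_lie_right] by blast
lemma lie_diff_left: "lie_prod (X - Z) Y = lie_prod X Y - lie_prod Z Y"
  using linear_diff[OF linear_lie_left] by blast
lemma lie_diff_right: "lie_prod Y (X - Z) = lie_prod Y X - lie_prod Y Z"
  using linear_diff[OF linear_lie_right] by blast
lemma lie_scale_left: "lie_prod (c *\<^sub>R X) Y = c * lie_prod X Y"
  using linear_scale[OF linear_lie_left[of Y], of c X] by simp
lemma lie_scale_right: "lie_prod Y (c *\<^sub>R X) = c * lie_prod Y X"
  using linear_scale[OF linear_lie_right[of Y], of c X] by simp
lemma lie_zero_left[simp]: "lie_prod 0 Y = 0"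
  using linear_0[OF linear_lie_left[of Y]] by simp
lemma lie_zero_right[simp]: "lie_prod Y 0 = 0"
  using linear_0[OF linear_lie_right[of Y]] by simp
lemma lie_sum_left: "lie_prod (\<Sum>i\<in>A. f i) Y = (\<Sum>i\<in>A. lie_prod (f i) Y)"
  using linear_sum[OF linear_lie_left[of Y], of f A] by simp
lemma lie_sum_right: "lie_prod Y (\<Sum>i\<in>A. f i) = (\<Sum>i\<in>A. lie_prod Y (f i))"
  using linear_sum[OF linear_lie_right[of Y], of f A] by simp

lemmas lie_simps = lie_add_left lie_add_right lie_diff_left lie_diff_right lie_scale_left lie_scale_right

lemma diag_exists:
  fixes U :: "'n::finite lievec set"
  assumes "subspace U"
  shows "\<exists>Y. independent Y \<and> span Y = U \<and> (\<forall>a\<in>Y. \<forall>b\<in>Y. a \<noteq> b \<longrightarrow> lie_prod a b = 0)"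
  using assms
proof (induction "dim U" arbitrary: U rule: less_induct)
  case less
  show ?case
  proof (cases "\<forall>u\<in>U. lie_prod u u = 0")
    case True
    obtain B where B: "B \<subseteq> U" "independent B" "U \<subseteq> span B" "card B = dim U"
      by (rule basis_exists)
    have sB: "span B = U"
      using B less.prems span_subspace by blast
    have "lie_prod a b = 0" if "a \<in> U" "b \<in> U" for a b
    proof -
      have "a + b \<in> U" using that less.prems subspace_add by blast
      hence "lie_prod (a+b) (a+b) = 0" using True by blast
      hence "lie_prod a a + lie_prod a b + lie_prod b a + lie_prod b b = 0"
        by (simp add: lie_simps)
      thus ?thesis using True that lie_sym[of a b] by auto
    qed
    thus ?thesis using B sB by blast
  next
    case False
    then obtain u where u: "u \<in> U" "lie_prod u u \<noteq> 0" by blast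
    define U' where "U' = {v\<in>U. lie_prod u v = 0}"
    have sU': "subspace U'"
      using less.prems unfolding U'_def subspace_def by (auto simp: lie_simps)
    have "U' \<subset> U" using u unfolding U'_def by auto
    hence "dim U' < dim U"
      using dim_psubset sU' less.prems span_eq_iff by metis
    then obtain Y' where Y': "independent Y'" "span Y' = U'"
      "\<forall>a\<in>Y'. \<forall>b\<in>Y'. a \<noteq> b \<longrightarrow> lie_prod a b = 0"
      using less.hyps sU' by blast
    have uY: "u \<notin> span Y'" using Y'(2) u unfolding U'_def by auto
    hence ind: "independent (insert u Y')"
      using Y'(1) independent_insert by (metis span_base)
    have Y'U: "Y' \<subseteq> U" using Y'(2) span_superset unfolding U'_def by blast
    have "span (insert u Y') = U"
    proof
      show "span (insert u Y') \<subseteq> U"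
        using Y'U u less.prems span_minimal by (metis insert_subset)
      show "U \<subseteq> span (insert u Y')"
      proof
        fix v assume v: "v \<in> U"
        define c where "c = lie_prod u v / lie_prod u u"
        have "v - c *\<^sub>R u \<in> U'"
          unfolding U'_def using v u less.prems
          by (auto simp: lie_simps c_def subspace_diff subspace_scale)
        thus "v \<in> span (insert u Y')"
          using span_breakdown_eq Y'(2) by blast
      qed
    qed
    moreover have "\<forall>a\<in>insert u Y'. \<forall>b\<in>insert u Y'. a \<noteq> b \<longrightarrow> lie_prod a b = 0"
    proof -
      have "\<forall>b\<in>Y'. lie_prod u b = 0" using Y'(2) span_superset unfolding U'_def by blast
      thus ?thesis using Y'(3) lie_sym[of _ u] by (metis insert_iff)
    qed
    ultimately show ?thesis using ind by blast
  qed
qed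

lemma gram_det_JNF: "gram_det Xs = Determinant.det (Matrix.mat (length Xs) (length Xs) (\<lambda>(i,j). lie_prod (Xs!i) (Xs!j)))"
  unfolding gram_det_def Determinant.det_def
  by (auto simp: lessThan_atLeast0 intro!: sum.cong prod.cong dest: permutes_in_image)

lemma exists_3:
  fixes a1 b1 c1 a2 b2 c2 :: real
  shows "\<exists>x y z. (x \<noteq> 0 \<or> y \<noteq> 0 \<or> z \<noteq> 0) \<and> x*a1+y*b1+z*c1 = 0 \<and> x*a2+y*b2+z*c2 = 0"
proof -
  have e1: "(b1*c2 - c1*b2)*a1+(c1*a2 - a1*c2)*b1+(a1*b2 - b1*a2)*c1 = 0" by (simp add: algebra_simps)
  have e2: "(b1*c2 - c1*b2)*a2+(c1*a2 - a1*c2)*b2+(a1*b2 - b1*a2)*c2 = 0" by (simp add: algebra_simps)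
  show ?thesis
  proof (cases "b1*c2 - c1*b2 \<noteq> 0 \<or> c1*a2 - a1*c2 \<noteq> 0 \<or> a1*b2 - b1*a2 \<noteq> 0")
    case True
    show ?thesis
      apply (rule exI[of _ "b1*c2 - c1*b2"], rule exI[of _ "c1*a2 - a1*c2"], rule exI[of _ "a1*b2 - b1*a2"])
      using True e1 e2 by (intro conjI)
  next
    case False
    hence z2: "c1*a2 - a1*c2 = 0" and z3: "a1*b2 - b1*a2 = 0" by auto
    have f1: "b1*a2+(-a1)*b2+0*c2 = 0"
      using z3 by (simp add: algebra_simps)
    have f2: "c1*a2+0*b2+(-a1)*c2 = 0"
      using z2 by (simp add: algebra_simps)
    show ?thesis
    proof (cases "a1 \<noteq> 0 \<or> b1 \<noteq> 0")
      case True
      show ?thesis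
        apply (rule exI[of _ b1], rule exI[of _ "-a1"], rule exI[of _ 0])
        using True f1 by (auto simp: mult.commute)
    next
      case F1: False
      show ?thesis
      proof (cases "c1 \<noteq> 0")
        case True
        show ?thesis
          apply (rule exI[of _ c1], rule exI[of _ 0], rule exI[of _ "-a1"])
          using True f2 F1 by (auto simp: mult.commute)
      next
        case F2: False
        show ?thesis
        proof (cases "a2 \<noteq> 0 \<or> b2 \<noteq> 0")
          case True
          show ?thesis
            apply (rule exI[of _ b2], rule exI[of _ "-a2"], rule exI[of _ 0])
            using True F1 F2 by (auto simp: mult.commute)
        next
          case F3: False
          show ?thesis
          proof (cases "c2 \<noteq> 0")
            case True
            show ?thesis
              apply (rule exI[of _ c2], rule exI[of _ 0], rule exI[of _ "-a2"])
              using True F1 F2 F3 by (auto simp: mult.commute)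
          next
            case False
            show ?thesis
              apply (rule exI[of _ 1], rule exI[of _ 0], rule exI[of _ 0])
              using False F1 F2 F3 by simp
          qed
        qed
      qed
    qed
  qed
qed

lemma no_three_neg:
  fixes a b c :: "'n::finite lievec"
  assumes ab: "lie_prod a b = 0" and ac: "lie_prod a c = 0" and bc: "lie_prod b c = 0"
    and aa: "lie_prod a a < 0" and bb: "lie_prod b b < 0" and cc: "lie_prod c c < 0"
  shows False
proof -
  obtain x y z where xyz: "x \<noteq> 0 \<or> y \<noteq> 0 \<or> z \<noteq> 0"
    "x*(fst a - fst (snd (snd a))) + y*(fst b - fst (snd (snd b))) + z*(fst c - fst (snd (snd c))) = 0"
    "x*(snd (snd (snd a))) + y*(snd (snd (snd b))) + z*(snd (snd (snd c))) = 0"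
    using exists_3[of "fst a - fst (snd (snd a))" "fst b - fst (snd (snd b))" "fst c - fst (snd (snd c))"
        "snd (snd (snd a))" "snd (snd (snd b))" "snd (snd (snd c))"] by blast
  define w where "w = x *\<^sub>R a + y *\<^sub>R b + z *\<^sub>R c"
  have ba: "lie_prod b a = 0" using ab lie_sym[of b a] by simp
  have ca: "lie_prod c a = 0" using ac lie_sym[of c a] by simp
  have cb: "lie_prod c b = 0" using bc lie_sym[of c b] by simp
  have wa: "lie_prod w a = x * lie_prod a a" unfolding w_def by (simp add: lie_simps ba ca)
  have wb: "lie_prod w b = y * lie_prod b b" unfolding w_def by (simp add: lie_simps ab cb)
  have wc: "lie_prod w c = z * lie_prod c c" unfolding w_def by (simp add: lie_simps ac bc)
  have ww0: "lie_prod w (x *\<^sub>R a + y *\<^sub>R b + z *\<^sub>R c) = x * lie_prod w a + y * lie_prod w b + z * lie_prod w c"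
    by (simp only: lie_add_right lie_scale_right)
  hence ww: "lie_prod w w = x * lie_prod w a + y * lie_prod w b + z * lie_prod w c"
    by (simp only: w_def[symmetric])
  have t1: "x*(x*lie_prod a a) \<le> 0" using aa by (simp add: mult_nonneg_nonpos mult.assoc[symmetric])
  have t2: "y*(y*lie_prod b b) \<le> 0" using bb by (simp add: mult_nonneg_nonpos mult.assoc[symmetric])
  have t3: "z*(z*lie_prod c c) \<le> 0" using cc by (simp add: mult_nonneg_nonpos mult.assoc[symmetric])
  have "x*(x*lie_prod a a) < 0 \<or> y*(y*lie_prod b b) < 0 \<or> z*(z*lie_prod c c) < 0"
  proof -
    have s1: "x*(x*lie_prod a a) < 0" if "x \<noteq> 0"
      using aa that by (metis mult.assoc mult_pos_neg not_real_square_gt_zero)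
    have s2: "y*(y*lie_prod b b) < 0" if "y \<noteq> 0"
      using bb that by (metis mult.assoc mult_pos_neg not_real_square_gt_zero)
    have s3: "z*(z*lie_prod c c) < 0" if "z \<noteq> 0"
      using cc that by (metis mult.assoc mult_pos_neg not_real_square_gt_zero)
    show ?thesis using xyz(1) s1 s2 s3 by blast
  qed
  hence neg: "lie_prod w w < 0" using t1 t2 t3 unfolding ww wa wb wc by linarith
  have "fst w - fst (snd (snd w)) = x*(fst a - fst (snd (snd a))) + y*(fst b - fst (snd (snd b))) + z*(fst c - fst (snd (snd c)))"
    unfolding w_def by (simp add: algebra_simps)
  hence e1: "fst w = fst (snd (snd w))" using xyz(2) by simp
  have "snd (snd (snd w)) = x*(snd (snd (snd a))) + y*(snd (snd (snd b))) + z*(snd (snd (snd c)))"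
    unfolding w_def by simp
  hence e2: "snd (snd (snd w)) = 0" using xyz(3) by simp
  have "lie_prod w w = 2 * (fst w * fst w) + fst (snd w) \<bullet> fst (snd w)"
    unfolding lie_prod_alt using e1 e2 by simp
  hence "lie_prod w w \<ge> 0" by simp
  thus False using neg by simp
qed

lemma sum_set_nth: "distinct ys \<Longrightarrow> (\<Sum>v\<in>set ys. f v) = (\<Sum>j<length ys. f (ys!j))"
  using sum.reindex_bij_betw[OF bij_betw_nth[of ys "{..<length ys}" "set ys"], of f] by simp

lemma orth_expand:
  assumes orth: "\<forall>i<length ys. \<forall>j<length ys. i \<noteq> j \<longrightarrow> lie_prod (ys!i) (ys!j) = 0"
  shows "lie_prod (\<Sum>j<length ys. a j *\<^sub>R ys!j) (\<Sum>l<length ys. b l *\<^sub>R ys!l)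
     = (\<Sum>j<length ys. a j * b j * lie_prod (ys!j) (ys!j))"
proof -
  let ?m = "length ys"
  have "lie_prod (\<Sum>j<?m. a j *\<^sub>R ys!j) (\<Sum>l<?m. b l *\<^sub>R ys!l)
      = (\<Sum>j<?m. a j * lie_prod (ys!j) (\<Sum>l<?m. b l *\<^sub>R ys!l))"
    by (simp add: lie_sum_left lie_scale_left)
  also have "\<dots> = (\<Sum>j<?m. a j * (\<Sum>l<?m. b l * lie_prod (ys!j) (ys!l)))"
    by (simp add: lie_sum_right lie_scale_right)
  also have "\<dots> = (\<Sum>j<?m. \<Sum>l<?m. a j * (b l * lie_prod (ys!j) (ys!l)))"
    by (simp add: sum_distrib_left)
  also have "\<dots> = (\<Sum>j<?m. \<Sum>l<?m. if l = j then a j * b j * lie_prod (ys!j) (ys!j) else 0)"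
    by (rule sum.cong[OF refl], rule sum.cong[OF refl]) (use orth in auto)
  also have "\<dots> = (\<Sum>j<?m. a j * b j * lie_prod (ys!j) (ys!j))"
    by (rule sum.cong[OF refl]) simp
  finally show ?thesis .
qed


lemma key:
  fixes L :: "'n::finite lievec list"
  assumes dL: "distinct L" and iL: "independent (set L)" and g: "gram_det L < 0"
    and X: "X \<in> span (set L)" and Z: "Z \<in> span (set L)"
    and XZ: "lie_prod X Z = 0" and XX: "lie_prod X X \<le> 0" and ZZ: "lie_prod Z Z \<le> 0"
  shows "\<exists>a b. (a \<noteq> 0 \<or> b \<noteq> 0) \<and> a *\<^sub>R X + b *\<^sub>R Z = 0"
proof -
  define m where "m = length L"
  define V where "V = span (set L)"
  have sV: "subspace V" by (simp add: V_def subspace_span)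
  obtain Y where Y: "independent Y" "span Y = V" "\<forall>a\<in>Y. \<forall>b\<in>Y. a \<noteq> b \<longrightarrow> lie_prod a b = 0"
    using diag_exists[OF sV] by blast
  have fY: "finite Y" using Y(1) finiteI_independent by blast
  have cY: "card Y = m"
  proof -
    have "card Y = dim Y" using dim_eq_card_independent[OF Y(1)] by simp
    also have "\<dots> = dim (span Y)" by (simp only: dim_span)
    also have "\<dots> = dim (set L)" unfolding Y(2) V_def by (rule dim_span)
    also have "\<dots> = card (set L)" using dim_eq_card_independent[OF iL] by simp
    also have "\<dots> = m" using distinct_card[OF dL] m_def by simp
    finally show ?thesis .
  qed
  obtain ys where ys: "set ys = Y" "distinct ys" using finite_distinct_list[OF fY] by blast
  have lys: "length ys = m" using distinct_card[OF ys(2)] ys(1) cY by simp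
  define d where "d j = lie_prod (ys!j) (ys!j)" for j
  have orth: "\<forall>i<length ys. \<forall>j<length ys. i \<noteq> j \<longrightarrow> lie_prod (ys!i) (ys!j) = 0"
  proof (intro allI impI)
    fix i j assume ij: "i < length ys" "j < length ys" "i \<noteq> j"
    hence "ys!i \<noteq> ys!j" using nth_eq_iff_index_eq[OF ys(2)] by simp
    moreover have "ys!i \<in> Y" "ys!j \<in> Y" using ij ys(1) nth_mem by blast+
    ultimately show "lie_prod (ys!i) (ys!j) = 0" using Y(3) by blast
  qed
  have rep: "\<exists>c. v = (\<Sum>j<m. c j *\<^sub>R ys!j)" if "v \<in> V" for v
  proof -
    have "v \<in> range (\<lambda>u. \<Sum>v\<in>set ys. u v *\<^sub>R v)"
      using that span_finite[OF fY] Y(2) ys(1) by simp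
    then obtain u where "v = (\<Sum>v\<in>set ys. u v *\<^sub>R v)" by blast
    hence "v = (\<Sum>j<m. u (ys!j) *\<^sub>R ys!j)" using sum_set_nth[OF ys(2)] lys by simp
    thus ?thesis by (intro exI[of _ "\<lambda>j. u (ys!j)"])
  qed
  have "\<forall>i. \<exists>c. i < m \<longrightarrow> L!i = (\<Sum>j<m. c j *\<^sub>R ys!j)"
  proof
    fix i
    show "\<exists>c. i < m \<longrightarrow> L!i = (\<Sum>j<m. c j *\<^sub>R ys!j)"
    proof (cases "i < m")
      case True
      hence "L!i \<in> V" unfolding V_def m_def by (simp add: span_base)
      then obtain c where "L!i = (\<Sum>j<m. c j *\<^sub>R ys!j)" using rep by blast
      thus ?thesis by blast
    qed simp
  qed
  from choice[OF this] obtain C where C0: "\<forall>i. i < m \<longrightarrow> L!i = (\<Sum>j<m. C i j *\<^sub>R ys!j)"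
    by blast
  have C: "L!i = (\<Sum>j<m. C i j *\<^sub>R ys!j)" if "i < m" for i using C0 that by blast
  have gram: "lie_prod (L!i) (L!i') = (\<Sum>j<m. C i j * C i' j * d j)" if "i < m" "i' < m" for i i'
    using orth_expand[OF orth, of "C i" "C i'"] C[OF that(1)] C[OF that(2)] lys d_def by simp
  define A where "A = Matrix.mat m m (\<lambda>(i,j). C i j)"
  define D where "D = Matrix.mat m m (\<lambda>(i,j). if i = j then d i else 0)"
  define G where "G = Matrix.mat m m (\<lambda>(i,j). lie_prod (L!i) (L!j))"
  have AD: "A * D = Matrix.mat m m (\<lambda>(i,l). C i l * d l)"
  proof (rule eq_matI)
    fix i l assume il: "i < dim_row (Matrix.mat m m (\<lambda>(i,l). C i l * d l))"
      "l < dim_col (Matrix.mat m m (\<lambda>(i,l). C i l * d l))"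
    hence "(A * D) $$ (i, l) = (\<Sum>t\<in>{0..<m}. C i t * (if t = l then d t else 0))"
      by (simp add: A_def D_def scalar_prod_def)
    also have "\<dots> = C i l * d l"
      using il by (simp add: if_distrib cong: if_cong)
    finally show "(A * D) $$ (i, l) = Matrix.mat m m (\<lambda>(i,l). C i l * d l) $$ (i, l)"
      using il by simp
  qed (simp_all add: A_def D_def)
  have GAD: "G = A * D * transpose_mat A"
  proof (rule eq_matI)
    fix i i' assume ii: "i < dim_row (A * D * transpose_mat A)" "i' < dim_col (A * D * transpose_mat A)"
    hence ii': "i < m" "i' < m" by (simp_all add: A_def)
    have "(A * D * transpose_mat A) $$ (i, i') = (\<Sum>l\<in>{0..<m}. C i l * d l * C i' l)"
      using ii' unfolding AD by (simp add: A_def scalar_prod_def)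
    also have "\<dots> = lie_prod (L!i) (L!i')"
      using gram[OF ii'] by (simp add: lessThan_atLeast0 mult_ac)
    finally show "G $$ (i, i') = (A * D * transpose_mat A) $$ (i, i')"
      using ii' by (simp add: G_def)
  qed (simp_all add: A_def G_def)
  have Am: "A \<in> carrier_mat m m" and Dm: "D \<in> carrier_mat m m" by (simp_all add: A_def D_def)
  have detD: "Determinant.det D = (\<Prod>j<m. d j)"
  proof -
    have "upper_triangular D" by (simp add: D_def upper_triangular_def)
    hence "Determinant.det D = prod_list (diag_mat D)" using det_upper_triangular Dm by blast
    also have "diag_mat D = map d [0..<m]"
      by (rule nth_equalityI) (simp_all add: diag_mat_def D_def)
    also have "prod_list (map d [0..<m]) = (\<Prod>j<m. d j)"
      by (induction m) simp_all
    finally show ?thesis .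
  qed
  have "gram_det L = Determinant.det G" unfolding gram_det_JNF G_def m_def ..
  also have "\<dots> = Determinant.det A * Determinant.det D * Determinant.det A"
    using det_mult[OF mult_carrier_mat[OF Am Dm] transpose_carrier_mat[THEN iffD2, OF Am]] det_mult[OF Am Dm]
      det_transpose[OF Am] GAD by simp
  finally have lt: "(Determinant.det A * Determinant.det A) * (\<Prod>j<m. d j) < 0"
    using g detD by (simp add: mult_ac)
  have P: "(\<Prod>j<m. d j) < 0"
  proof (rule ccontr)
    assume "\<not> (\<Prod>j<m. d j) < 0"
    hence "0 \<le> (\<Prod>j<m. d j)" by simp
    hence "0 \<le> (Determinant.det A * Determinant.det A) * (\<Prod>j<m. d j)"
      using mult_nonneg_nonneg[OF zero_le_square[of "Determinant.det A"]] by blast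
    thus False using lt by simp
  qed
  have dnz: "d j \<noteq> 0" if "j < m" for j
    using P that by (metis finite_lessThan lessThan_iff less_irrefl prod_zero_iff)
  define N where "N = {j. j < m \<and> d j < 0}"
  have fN: "finite N" unfolding N_def by simp
  have no3: False if "a \<in> N" "b \<in> N" "c \<in> N" "a \<noteq> b" "a \<noteq> c" "b \<noteq> c" for a b c
    using no_three_neg[of "ys!a" "ys!b" "ys!c"] that orth lys unfolding N_def d_def by auto
  have posN: "d j > 0" if "j < m" "j \<notin> N" for j
    using dnz[OF that(1)] that unfolding N_def by force
  have split: "(\<Prod>j<m. d j) = (\<Prod>j\<in>N. d j) * (\<Prod>j\<in>{..<m} - N. d j)"
    using prod.subset_diff[of N "{..<m}" d] unfolding N_def by (auto simp: mult.commute)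
  have pos2: "(\<Prod>j\<in>{..<m} - N. d j) > 0"
    by (rule prod_pos) (use posN in auto)
  obtain j0 where j0: "N = {j0}"
  proof (cases "N = {}")
    case True
    hence "(\<Prod>j<m. d j) > 0" using split pos2 by simp
    then show ?thesis using P by linarith
  next
    case False
    then obtain a where a: "a \<in> N" by blast
    show ?thesis
    proof (cases "N = {a}")
      case True thus ?thesis using that by blast
    next
      case False
      then obtain b where b: "b \<in> N" "b \<noteq> a" using a by blast
      have "N = {a, b}" using no3 a b by blast
      hence "(\<Prod>j\<in>N. d j) = d a * d b" using b by simp
      moreover have "d a * d b > 0" using a b unfolding N_def by (simp add: mult_neg_neg)
      ultimately have "(\<Prod>j\<in>N. d j) > 0" by simp
      hence "(\<Prod>j<m. d j) > 0" using split pos2 by simp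
      then show ?thesis using P by linarith
    qed
  qed
  have j0m: "j0 < m" using j0 unfolding N_def by auto
  have dpos: "d j > 0" if "j < m" "j \<noteq> j0" for j using posN that j0 by auto
  define w where "w \<gamma> = (\<Sum>j<m. \<gamma> j *\<^sub>R ys!j)" for \<gamma>
  have wzero: "w \<gamma> = 0" if g0: "\<gamma> j0 = 0" and le: "lie_prod (w \<gamma>) (w \<gamma>) \<le> 0" for \<gamma>
  proof -
    have eq: "lie_prod (w \<gamma>) (w \<gamma>) = (\<Sum>j<m. \<gamma> j * \<gamma> j * d j)"
      using orth_expand[OF orth, of \<gamma> \<gamma>] lys unfolding w_def d_def by simp
    have nn: "\<forall>j\<in>{..<m}. 0 \<le> \<gamma> j * \<gamma> j * d j"
    proof
      fix j assume "j \<in> {..<m}"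
      thus "0 \<le> \<gamma> j * \<gamma> j * d j"
        using dpos[of j] g0 by (cases "j = j0") (auto intro!: mult_nonneg_nonneg)
    qed
    have "(\<Sum>j<m. \<gamma> j * \<gamma> j * d j) = 0"
    proof -
      have "0 \<le> (\<Sum>j<m. \<gamma> j * \<gamma> j * d j)" using nn by (intro sum_nonneg) auto
      thus ?thesis using le eq by linarith
    qed
    hence "\<forall>j\<in>{..<m}. \<gamma> j * \<gamma> j * d j = 0" using sum_nonneg_eq_0_iff[of "{..<m}" "\<lambda>j. \<gamma> j * \<gamma> j * d j"] nn by simp
    hence "\<forall>j<m. \<gamma> j = 0"
    proof (intro allI impI)
      fix j assume H: "\<forall>j\<in>{..<m}. \<gamma> j * \<gamma> j * d j = 0" and j: "j < m"
      show "\<gamma> j = 0"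
      proof (cases "j = j0")
        case True thus ?thesis using g0 by simp
      next
        case False
        hence "d j \<noteq> 0" using dpos[OF j] by simp
        moreover have "\<gamma> j * \<gamma> j * d j = 0" using H j by simp
        ultimately show ?thesis by simp
      qed
    qed
    thus ?thesis unfolding w_def by simp
  qed
  obtain \<alpha> where \<alpha>: "X = w \<alpha>" using rep[of X] X unfolding V_def w_def by blast
  obtain \<beta> where \<beta>: "Z = w \<beta>" using rep[of Z] Z unfolding V_def w_def by blast
  define W where "W = \<beta> j0 *\<^sub>R X - \<alpha> j0 *\<^sub>R Z"
  have W: "W = w (\<lambda>j. \<beta> j0 * \<alpha> j - \<alpha> j0 * \<beta> j)"
    unfolding W_def \<alpha> \<beta> w_def
    by (simp add: scaleR_sum_right scaleR_diff_left sum_subtractf)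
  have ZX: "lie_prod Z X = 0" using XZ lie_sym[of Z X] by simp
  have "lie_prod W W = \<beta> j0 * \<beta> j0 * lie_prod X X + \<alpha> j0 * \<alpha> j0 * lie_prod Z Z"
    unfolding W_def by (simp add: lie_simps XZ ZX right_diff_distrib)
  moreover have "\<beta> j0 * \<beta> j0 * lie_prod X X \<le> 0"
    using XX by (intro mult_nonneg_nonpos) simp_all
  moreover have "\<alpha> j0 * \<alpha> j0 * lie_prod Z Z \<le> 0"
    using ZZ by (intro mult_nonneg_nonpos) simp_all
  ultimately have "lie_prod W W \<le> 0" by linarith
  hence "W = 0" using wzero W by simp
  show ?thesis
  proof (cases "\<beta> j0 \<noteq> 0 \<or> \<alpha> j0 \<noteq> 0")
    case True
    thus ?thesis using \<open>W = 0\<close> unfolding W_def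
      by (intro exI[of _ "\<beta> j0"] exI[of _ "- \<alpha> j0"]) auto
  next
    case False
    hence "X = 0" using wzero[of \<alpha>] \<alpha> XX by simp
    thus ?thesis by (intro exI[of _ 1] exI[of _ 0]) simp
  qed
qed


lemma perp_S_iff[simp]: "Y \<in> lie_perp {S} \<longleftrightarrow> lie_prod S Y = 0"
  by (simp add: lie_perp_def)

lemma span_scale_single: "k \<noteq> 0 \<Longrightarrow> span {k *\<^sub>R S} = span {S}"
proof -
  assume k: "k \<noteq> 0"
  have "range (\<lambda>c. c *\<^sub>R (k *\<^sub>R S)) = range (\<lambda>c. c *\<^sub>R S)"
  proof (intro equalityI subsetI)
    fix v assume "v \<in> range (\<lambda>c. c *\<^sub>R (k *\<^sub>R S))"
    then obtain c where "v = c *\<^sub>R (k *\<^sub>R S)" by auto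
    thus "v \<in> range (\<lambda>c. c *\<^sub>R S)" using rangeI[of "\<lambda>c. c *\<^sub>R S" "c*k"] by simp
  next
    fix v assume "v \<in> range (\<lambda>c. c *\<^sub>R S)"
    then obtain c where "v = c *\<^sub>R S" by auto
    thus "v \<in> range (\<lambda>c. c *\<^sub>R (k *\<^sub>R S))"
      using rangeI[of "\<lambda>c. c *\<^sub>R (k *\<^sub>R S)" "c/k"] k by simp
  qed
  thus ?thesis by (simp add: span_singleton)
qed

lemma cyc_eq: "X \<noteq> 0 \<Longrightarrow> X \<in> span {S} \<Longrightarrow> cycle X = cycle S"
proof -
  assume X: "X \<noteq> 0" "X \<in> span {S}"
  then obtain k where k: "X = k *\<^sub>R S" by (auto simp: span_singleton)
  hence "k \<noteq> 0" using X by auto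
  thus ?thesis unfolding cycle_def k by (rule span_scale_single)
qed

lemma span2: "P \<in> span {X, S} \<longleftrightarrow> (\<exists>a b. P = a *\<^sub>R X + b *\<^sub>R S)"
proof
  assume "P \<in> span {X, S}"
  then obtain a where "P - a *\<^sub>R X \<in> span {S}" using span_breakdown_eq by blast
  then obtain b where "P - a *\<^sub>R X = b *\<^sub>R S" by (auto simp: span_singleton)
  hence "P = a *\<^sub>R X + b *\<^sub>R S" by (simp add: algebra_simps)
  thus "\<exists>a b. P = a *\<^sub>R X + b *\<^sub>R S" by blast
next
  assume "\<exists>a b. P = a *\<^sub>R X + b *\<^sub>R S"
  then obtain a b where "P = a *\<^sub>R X + b *\<^sub>R S" by blast
  thus "P \<in> span {X, S}"
    by (simp add: span_add span_scale span_base)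
qed

lemma ds:
  assumes sV: "subspace V" and W0: "W0 \<in> V" and nz: "lie_prod S W0 \<noteq> 0"
  shows "direct_sum_eq V (V \<inter> lie_perp {S}) (span {W0})"
  unfolding direct_sum_eq_def
proof
  show "V = {u + w |u w. u \<in> V \<inter> lie_perp {S} \<and> w \<in> span {W0}}"
  proof (intro equalityI subsetI)
    fix v assume v: "v \<in> V"
    define c where "c = lie_prod S v / lie_prod S W0"
    have "v - c *\<^sub>R W0 \<in> V" using sV v W0 by (simp add: subspace_diff subspace_scale)
    moreover have "lie_prod S (v - c *\<^sub>R W0) = 0" using nz by (simp add: lie_simps c_def)
    moreover have "c *\<^sub>R W0 \<in> span {W0}" by (simp add: span_scale span_base)
    ultimately show "v \<in> {u + w |u w. u \<in> V \<inter> lie_perp {S} \<and> w \<in> span {W0}}"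
      by (intro CollectI exI[of _ "v - c *\<^sub>R W0"] exI[of _ "c *\<^sub>R W0"]) simp
  next
    fix v assume "v \<in> {u + w |u w. u \<in> V \<inter> lie_perp {S} \<and> w \<in> span {W0}}"
    then obtain u w where uw: "v = u + w" "u \<in> V" "w \<in> span {W0}" by blast
    then obtain k where "w = k *\<^sub>R W0" by (auto simp: span_singleton)
    thus "v \<in> V" using uw sV W0 by (simp add: subspace_add subspace_scale)
  qed
  show "V \<inter> lie_perp {S} \<inter> span {W0} = {0}"
  proof (rule equalityI)
    show "V \<inter> lie_perp {S} \<inter> span {W0} \<subseteq> {0}"
    proof
      fix z assume z: "z \<in> V \<inter> lie_perp {S} \<inter> span {W0}"
      then obtain k where k: "z = k *\<^sub>R W0" by (auto simp: span_singleton)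
      have "lie_prod S z = 0" using z by simp
      hence "k * lie_prod S W0 = 0" using k by (simp add: lie_simps)
      hence "k = 0" using nz by simp
      thus "z \<in> {0}" using k by simp
    qed
    show "{0} \<subseteq> V \<inter> lie_perp {S} \<inter> span {W0}" using sV by (simp add: subspace_0 span_zero)
  qed
qed

theorem mainTheorem6:
  fixes Xs :: "'n::finite lievec list" and S :: "'n lievec" and k :: nat
  assumes n2: "CARD('n) \<ge> 2"
    and lenk: "length Xs = k" and k2: "2 \<le> k" and kn: "k \<le> CARD('n)"
    and proper: "\<forall>X\<in>set Xs. X \<noteq> 0 \<and> lie_prod X X = 0"
    and SS: "lie_prod S S \<le> 0"
    and indep: "distinct (Xs @ [S])" "independent (set (Xs @ [S]))"
    and hyp: "gram_det (Xs @ [S]) < 0"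
  shows
   "(lie_prod S S < 0 \<longrightarrow>
       (\<forall>X. X \<noteq> 0 \<and> X \<in> span (set (Xs @ [S])) \<and> lie_prod X X \<noteq> 0 \<and> cycle X \<noteq> cycle S
            \<longrightarrow> card (projections X S) = 2)
     \<and> (\<forall>X. X \<noteq> 0 \<and> X \<in> span (set (Xs @ [S])) \<and> X \<in> lie_perp {S} \<longrightarrow> lie_prod X X > 0)
     \<and> direct_sum_eq (span (set (Xs @ [S]))) (span (set (Xs @ [S])) \<inter> lie_perp {S}) (span {S}))
  \<and> (lie_prod S S = 0 \<longrightarrow>
       (\<forall>X. X \<noteq> 0 \<and> X \<in> span (set (Xs @ [S])) \<and> X \<in> lie_perp {S} \<and> cycle X \<noteq> cycle S
            \<longrightarrow> lie_prod X X > 0 \<and> projections X S \<subseteq> {cycle S})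
     \<and> (\<forall>Y. Y \<noteq> 0 \<and> lie_prod Y Y = 0 \<and> Y \<in> span (set (Xs @ [S])) \<and> Y \<notin> lie_perp {S}
            \<longrightarrow> direct_sum_eq (span (set (Xs @ [S]))) (span (set (Xs @ [S])) \<inter> lie_perp {S}) (span {Y})))"
proof -
  define L where "L = Xs @ [S]"
  define V where "V = span (set L)"
  have dL: "distinct L" using indep(1) L_def by simp
  have iL: "independent (set L)" using indep(2) L_def by simp
  have g: "gram_det L < 0" using hyp L_def by simp
  have sV: "subspace V" by (simp add: V_def subspace_span)
  have SV: "S \<in> V" unfolding V_def L_def by (simp add: span_base)
  have S0: "S \<noteq> 0"
  proof
    assume "S = 0"
    hence "0 \<in> set L" by (simp add: L_def)
    thus False using iL dependent_zero by blast
  qed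
  have pp: "lie_prod X X > 0" if X: "X \<in> V" "lie_prod S X = 0" "X \<notin> span {S}" for X
  proof (rule ccontr)
    assume "\<not> lie_prod X X > 0"
    hence XX: "lie_prod X X \<le> 0" by simp
    have XS: "lie_prod X S = 0" using X(2) lie_sym[of X S] by simp
    obtain a b where ab: "a \<noteq> 0 \<or> b \<noteq> 0" "a *\<^sub>R X + b *\<^sub>R S = 0"
      using key[OF dL iL g, of X S] X(1) SV XS XX SS unfolding V_def by blast
    show False
    proof (cases "a = 0")
      case True
      thus False using ab S0 by simp
    next
      case False
      have "a *\<^sub>R X = (- b) *\<^sub>R S" using ab(2) by (simp add: eq_neg_iff_add_eq_0)
      have "X = inverse a *\<^sub>R (a *\<^sub>R X)" using False by simp
      also have "\<dots> = (inverse a * - b) *\<^sub>R S" using \<open>a *\<^sub>R X = (- b) *\<^sub>R S\<close> by simp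
      finally have Xeq: "X = (inverse a * - b) *\<^sub>R S" .
      have "(inverse a * - b) *\<^sub>R S \<in> span {S}"
        by (rule span_scale, rule span_base, simp)
      hence "X \<in> span {S}" by (subst Xeq)
      thus False using X(3) by simp
    qed
  qed
  have notspan: "X \<notin> span {S}" if "X \<noteq> 0" "cycle X \<noteq> cycle S" for X
    using cyc_eq that by blast
  show ?thesis
  proof (intro conjI impI)
    assume SSn: "lie_prod S S < 0"
    show "\<forall>X. X \<noteq> 0 \<and> X \<in> span (set (Xs @ [S])) \<and> lie_prod X X \<noteq> 0 \<and> cycle X \<noteq> cycle S
            \<longrightarrow> card (projections X S) = 2"
    proof (intro allI impI)
      fix X assume H: "X \<noteq> 0 \<and> X \<in> span (set (Xs @ [S])) \<and> lie_prod X X \<noteq> 0 \<and> cycle X \<noteq> cycle S"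
      have XV: "X \<in> V" using H unfolding V_def L_def by simp
      have XnS: "X \<notin> span {S}" using notspan H by blast
      define c where "c = lie_prod S X / lie_prod S S"
      define X' where "X' = X - c *\<^sub>R S"
      have X'V: "X' \<in> V" unfolding X'_def using sV XV SV by (simp add: subspace_diff subspace_scale)
      have SX': "lie_prod S X' = 0" unfolding X'_def c_def using SSn by (simp add: lie_simps)
      have X'S: "lie_prod X' S = 0" using SX' lie_sym[of X' S] by simp
      have X'nS: "X' \<notin> span {S}"
      proof
        assume "X' \<in> span {S}"
        hence "X' + c *\<^sub>R S \<in> span {S}" by (simp add: span_add span_scale span_base)
        thus False using XnS unfolding X'_def by simp
      qed
      define p where "p = lie_prod X' X'"
      define q where "q = - lie_prod S S"
      have p: "p > 0" unfolding p_def using pp X'V SX' X'nS by blast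
      have q: "q > 0" unfolding q_def using SSn by simp
      define r where "r = sqrt (p / q)"
      have r: "r > 0" unfolding r_def using p q by simp
      have rr: "r * r * q = p" unfolding r_def using p q by simp
      define N1 where "N1 = X' + r *\<^sub>R S"
      define N2 where "N2 = X' - r *\<^sub>R S"
      have SS: "lie_prod S S = - q" unfolding q_def by simp
      have nullN1: "lie_prod N1 N1 = 0" unfolding N1_def
        using rr by (simp add: lie_simps SX' X'S SS p_def[symmetric] algebra_simps)
      have nullN2: "lie_prod N2 N2 = 0" unfolding N2_def
        using rr by (simp add: lie_simps SX' X'S SS p_def[symmetric] algebra_simps)
      have N1nz: "N1 \<noteq> 0"
      proof
        assume "N1 = 0"
        hence Xe: "X' = (- r) *\<^sub>R S" unfolding N1_def by (simp add: eq_neg_iff_add_eq_0)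
        have "(- r) *\<^sub>R S \<in> span {S}" by (rule span_scale, rule span_base, simp)
        hence "X' \<in> span {S}" by (subst Xe)
        thus False using X'nS by simp
      qed
      have N2nz: "N2 \<noteq> 0"
      proof
        assume "N2 = 0"
        hence "X' = r *\<^sub>R S" unfolding N2_def by simp
        hence "X' \<in> span {S}" by (simp add: span_scale span_base)
        thus False using X'nS by simp
      qed
      have N1sp: "N1 \<in> span {X, S}" unfolding span2 N1_def X'_def
        by (rule exI[of _ 1], rule exI[of _ "r - c"]) (simp add: algebra_simps)
      have N2sp: "N2 \<in> span {X, S}" unfolding span2 N2_def X'_def
        by (rule exI[of _ 1], rule exI[of _ "- r - c"]) (simp add: algebra_simps)
      have proj: "projections X S = {cycle N1, cycle N2}"
      proof (intro equalityI subsetI)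
        fix Q assume "Q \<in> projections X S"
        then obtain P where P: "Q = cycle P" "P \<noteq> 0" "P \<in> span {X, S}" "lie_prod P P = 0"
          unfolding projections_def by blast
        then obtain a b where ab: "P = a *\<^sub>R X + b *\<^sub>R S" using span2 by blast
        define b' where "b' = b + a * c"
        have Pab: "P = a *\<^sub>R X' + b' *\<^sub>R S" unfolding ab X'_def b'_def by (simp add: algebra_simps)
        have "lie_prod P P = a * a * p - b' * b' * q"
          unfolding Pab by (simp add: lie_simps SX' X'S SS p_def[symmetric] algebra_simps)
        hence eq: "a * a * p = b' * b' * q" using P(4) by simp
        have a0: "a \<noteq> 0"
        proof
          assume "a = 0"
          hence "b' * b' * q = 0" using eq by simp
          hence "b' = 0" using q by simp
          thus False using P(2) Pab \<open>a = 0\<close> by simp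
        qed
        have "(a * r) * (a * r) * q = b' * b' * q" using eq rr by (simp add: algebra_simps)
        hence "(a * r) * (a * r) = b' * b'" using q by simp
        hence "b' = a * r \<or> b' = - (a * r)" by (simp add: square_eq_iff eq_commute)
        thus "Q \<in> {cycle N1, cycle N2}"
        proof
          assume "b' = a * r"
          hence "P = a *\<^sub>R N1" unfolding Pab N1_def by (simp add: algebra_simps)
          hence "cycle P = cycle N1" unfolding cycle_def using a0 by (simp add: span_scale_single)
          thus ?thesis using P(1) by simp
        next
          assume "b' = - (a * r)"
          hence "P = a *\<^sub>R N2" unfolding Pab N2_def by (simp add: algebra_simps)
          hence "cycle P = cycle N2" unfolding cycle_def using a0 by (simp add: span_scale_single)
          thus ?thesis using P(1) by simp
        qed
      next
        fix Q assume "Q \<in> {cycle N1, cycle N2}"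
        thus "Q \<in> projections X S"
          unfolding projections_def using N1nz N2nz N1sp N2sp nullN1 nullN2 by blast
      qed
      have neq: "cycle N1 \<noteq> cycle N2"
      proof
        assume "cycle N1 = cycle N2"
        hence "N2 \<in> span {N1}" unfolding cycle_def by (metis span_base singletonI)
        then obtain k where k: "N2 = k *\<^sub>R N1" by (auto simp: span_singleton)
        have "lie_prod X' N2 = p" unfolding N2_def by (simp add: lie_simps X'S p_def)
        moreover have "lie_prod X' N1 = p" unfolding N1_def by (simp add: lie_simps X'S p_def)
        ultimately have "p = k * p" using k by (simp add: lie_simps)
        hence k1: "k = 1" using p by simp
        have "lie_prod S N2 = r * q" unfolding N2_def by (simp add: lie_simps SX' SS)
        moreover have "lie_prod S N1 = - (r * q)" unfolding N1_def by (simp add: lie_simps SX' SS)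
        ultimately have "r * q = - (r * q)" using k k1 by simp
        thus False using r q by simp
      qed
      show "card (projections X S) = 2" using proj neq by simp
    qed
    show "\<forall>X. X \<noteq> 0 \<and> X \<in> span (set (Xs @ [S])) \<and> X \<in> lie_perp {S} \<longrightarrow> lie_prod X X > 0"
    proof (intro allI impI)
      fix X assume H: "X \<noteq> 0 \<and> X \<in> span (set (Xs @ [S])) \<and> X \<in> lie_perp {S}"
      have "X \<notin> span {S}"
      proof
        assume "X \<in> span {S}"
        then obtain k where k: "X = k *\<^sub>R S" by (auto simp: span_singleton)
        have "lie_prod S X = 0" using H by simp
        hence "k * lie_prod S S = 0" unfolding k by (simp only: lie_scale_right)
        hence "k = 0" using SSn by simp
        thus False using H k by simp
      qed
      thus "lie_prod X X > 0" using pp H unfolding V_def L_def by simp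
    qed
    show "direct_sum_eq (span (set (Xs @ [S]))) (span (set (Xs @ [S])) \<inter> lie_perp {S}) (span {S})"
      using ds[OF sV SV] SSn unfolding V_def L_def by simp
  next
    assume SS0: "lie_prod S S = 0"
    show "\<forall>X. X \<noteq> 0 \<and> X \<in> span (set (Xs @ [S])) \<and> X \<in> lie_perp {S} \<and> cycle X \<noteq> cycle S
            \<longrightarrow> lie_prod X X > 0 \<and> projections X S \<subseteq> {cycle S}"
    proof (intro allI impI conjI)
      fix X assume H: "X \<noteq> 0 \<and> X \<in> span (set (Xs @ [S])) \<and> X \<in> lie_perp {S} \<and> cycle X \<noteq> cycle S"
      have XP: "lie_prod X X > 0" using pp notspan H unfolding V_def L_def by simp
      thus "lie_prod X X > 0" .
      show "projections X S \<subseteq> {cycle S}"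
      proof
        fix Q assume "Q \<in> projections X S"
        then obtain P where P: "Q = cycle P" "P \<noteq> 0" "P \<in> span {X, S}" "lie_prod P P = 0"
          unfolding projections_def by blast
        then obtain a b where ab: "P = a *\<^sub>R X + b *\<^sub>R S" using span2 by blast
        have SX: "lie_prod S X = 0" using H by simp
        have XS: "lie_prod X S = 0" using SX lie_sym[of X S] by simp
        have "lie_prod P P = a * a * lie_prod X X"
          unfolding ab by (simp add: lie_simps SX XS SS0)
        hence "a = 0" using P(4) XP by simp
        hence "P = b *\<^sub>R S" using ab by simp
        moreover hence "b \<noteq> 0" using P(2) by auto
        ultimately have "cycle P = cycle S" unfolding cycle_def by (simp add: span_scale_single)
        thus "Q \<in> {cycle S}" using P(1) by simp
      qed
    qed
    show "\<forall>Y. Y \<noteq> 0 \<and> lie_prod Y Y = 0 \<and> Y \<in> span (set (Xs @ [S])) \<and> Y \<notin> lie_perp {S}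
            \<longrightarrow> direct_sum_eq (span (set (Xs @ [S]))) (span (set (Xs @ [S])) \<inter> lie_perp {S}) (span {Y})"
    proof (intro allI impI)
      fix Y assume H: "Y \<noteq> 0 \<and> lie_prod Y Y = 0 \<and> Y \<in> span (set (Xs @ [S])) \<and> Y \<notin> lie_perp {S}"
      thus "direct_sum_eq (span (set (Xs @ [S]))) (span (set (Xs @ [S])) \<inter> lie_perp {S}) (span {Y})"
        using ds[OF sV, of Y S] unfolding V_def L_def by simp
    qed
  qed
qed

end
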